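(* Let $\theta$ be supertransversal. Let $\sigma\in\mathcal C_\theta$ be a facet (face of dimension $n_0-1$), let $B_{i,\ell}(\theta)$ be the unique bent hyperplane containing $\sigma$ (neuron $i$ of hidden layer $\ell$), and for each $k\in[L]$ let $S_k\subseteq[n_k]$ be the set of neurons of layer $k$ whose preactivation is strictly positive on the relative interior of $\sigma$. Then $$c_\theta(\sigma)=\Big\|(W^{(1)})^\top D_{S_1}\cdots(W^{(\ell-1)})^\top D_{S_{\ell-1}}(W^{(\ell)})^\top e_i\Big\|_2\; W^{(L+1)}D_{S_L}\cdots W^{(\ell+1)}e_i .$$
   Context: Networks: $\mathcal A=(n_0,\dots,n_{L+1})$, $\theta=(W^{(\ell)},b^{(\ell)})_{\ell\in[L+1]}$, $a^{(0)}=x$, $z^{(\ell)}=W^{(\ell)}a^{(\ell-1)}+b^{(\ell)}$, $a^{(\ell)}=\max(0,z^{(\ell)})$, $f_\theta=W^{(L+1)}a^{(L)}+b^{(L+1)}$. $D_S$: diagonal $0/1$ matrix with $(D_S)_{ii}=1$ iff $i\in S$; $e_i$ standard basis vector. Canonical complex: $\mathcal C_{\theta,0}=\{\mathbb R^{n_0}\}$; for $R\in\mathcal C_{\theta,\ell-1}$, $H_R(\ell,j)=\{x\in\operatorname{aff}(R):z^{(\ell)}_j|_R(x)=0\}$, half-spaces $H^\pm_R(\ell,j)$, $H^0_R=H_R$; $\mathcal C_{\theta,\ell}=\{R\cap\bigcap_jH^{s_j}_R(\ell,j)\}$; $\mathcal C_\theta=\mathcal C_{\theta,L}$; $f_\theta$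 is affine on each polyhedron of $\mathcal C_\theta$. Bent hyperplane $B_{j,\ell}(\theta)=\bigcup\{\{x\in R:z^{(\ell)}_j|_R(x)=0\}:R\in\mathcal C_{\theta,\ell-1},z^{(\ell)}_j|_R\text{ non-constant}\}$. $\theta$ is supertransversal if every face of $\mathcal C_\theta$ of codimension $k$ lies in exactly $k$ bent hyperplanes. Tropical weight: for a facet $\sigma=P\cap Q$ of $\mathcal C_\theta$ with full-dimensional $P,Q$ on which $f_\theta(x)=A_Px+b_P$, resp. $A_Qx+b_Q$, $c_\theta(\sigma)=(A_P-A_Q)e_{P/\sigma}$, where $e_{P/\sigma}$ is the unit vector orthogonal to $\operatorname{aff}(\sigma)$ pointing from $\sigma$ into $P$ (this is independent of the labelling of $P,Q$). *)

theory Defs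
  imports "HOL-Analysis.Analysis"
begin

text \<open>A ReLU network with input space the Euclidean space 'a (so n_0 = DIM('a)).
  depth = L (number of hidden layers); width k = n_k for 1 <= k <= L+1.
  Row j of W^(1) is W1 j :: 'a, so z^(1)_j(x) = W1 j \<bullet> x + bias 1 j.
  For 2 <= k <= L+1, the (j,m) entry of W^(k) is Wt k j m; bias k j is b^(k)_j.\<close>
record 'a net =
  depth :: nat
  width :: "nat \<Rightarrow> nat"
  W1    :: "nat \<Rightarrow> 'a"
  Wt    :: "nat \<Rightarrow> nat \<Rightarrow> nat \<Rightarrow> real"
  bias  :: "nat \<Rightarrow> nat \<Rightarrow> real"

text \<open>Preactivation z^(k)_j(x) for k >= 1 (the value at k = 0 is a dummy).\<close>
fun pre :: "('a::euclidean_space) net \<Rightarrow> nat \<Rightarrow> 'a \<Rightarrow> nat \<Rightarrow> real" where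
  "pre N 0 x j = 0"
| "pre N (Suc 0) x j = W1 N j \<bullet> x + bias N 1 j"
| "pre N (Suc (Suc k)) x j =
     (\<Sum>m<width N (Suc k). Wt N (Suc (Suc k)) j m * max 0 (pre N (Suc k) x m))
     + bias N (Suc (Suc k)) j"

definition fnet :: "('a::euclidean_space) net \<Rightarrow> 'a \<Rightarrow> nat \<Rightarrow> real" where
  "fnet N x = pre N (Suc (depth N)) x"

text \<open>Sign condition: s > 0 gives the closed half-space H^+, s < 0 gives H^-, s = 0 gives H.\<close>
definition sgn_ok :: "int \<Rightarrow> real \<Rightarrow> bool" where
  "sgn_ok s v = (if s > 0 then v \<ge> 0 else if s < 0 then v \<le> 0 else v = 0)"

text \<open>The collections C_{theta,l}. For x in R, the affine extension z_j|_R agrees with z_j,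
  so R \<inter> \<Inter>_j H^{s_j}_R(l,j) = {x \<in> R. each z^(l)_j(x) satisfies its sign condition}.\<close>
fun cplx :: "('a::euclidean_space) net \<Rightarrow> nat \<Rightarrow> 'a set set" where
  "cplx N 0 = {UNIV}"
| "cplx N (Suc l) =
     {{x \<in> R. \<forall>j<width N (Suc l). sgn_ok (s j) (pre N (Suc l) x j)} | R s.
        R \<in> cplx N l \<and> (\<forall>j. s j \<in> {-1, 0, 1})}"

definition cells :: "('a::euclidean_space) net \<Rightarrow> 'a set set" where
  "cells N = {C \<in> cplx N (depth N). C \<noteq> {}}"

text \<open>Bent hyperplane B_{j,l}(theta). An affine function on aff(R) is non-constant iff it
  is non-constant on R.\<close>
definition bent :: "('a::euclidean_space) net \<Rightarrow> nat \<Rightarrow> nat \<Rightarrow> 'a set" where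
  "bent N l j = \<Union>{{x \<in> R. pre N l x j = 0} | R.
      R \<in> cplx N (l - 1) \<and> (\<exists>x\<in>R. \<exists>y\<in>R. pre N l x j \<noteq> pre N l y j)}"

definition supertransversal :: "('a::euclidean_space) net \<Rightarrow> bool" where
  "supertransversal N \<longleftrightarrow>
     (\<forall>F \<in> cells N.
        int (card {(l, j). 1 \<le> l \<and> l \<le> depth N \<and> j < width N l \<and> F \<subseteq> bent N l j})
          = int DIM('a) - aff_dim F)"

definition lin_part :: "('a::euclidean_space) net \<Rightarrow> 'a set \<Rightarrow> (nat \<Rightarrow> 'a \<Rightarrow> real) \<Rightarrow> bool" where
  "lin_part N P A \<longleftrightarrow> (\<forall>j. linear (A j)) \<and>
     (\<exists>b. \<forall>x\<in>P. \<forall>j<width N (Suc (depth N)). fnet N x j = A j x + b j)"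

definition unit_normal :: "('a::euclidean_space) set \<Rightarrow> 'a set \<Rightarrow> 'a \<Rightarrow> bool" where
  "unit_normal \<sigma> P e \<longleftrightarrow> norm e = 1 \<and>
     (\<forall>u\<in>\<sigma>. \<forall>v\<in>\<sigma>. e \<bullet> (u - v) = 0) \<and>
     (\<forall>s\<in>\<sigma>. \<forall>p\<in>P. e \<bullet> (p - s) \<ge> 0)"

definition trop_weight :: "('a::euclidean_space) net \<Rightarrow> 'a set \<Rightarrow> nat \<Rightarrow> real" where
  "trop_weight N \<sigma> = (SOME c. \<exists>P Q A B e.
      P \<in> cells N \<and> Q \<in> cells N \<and> aff_dim P = int DIM('a) \<and> aff_dim Q = int DIM('a) \<and>
      P \<noteq> Q \<and> \<sigma> = P \<inter> Q \<and> lin_part N P A \<and> lin_part N Q B \<and> unit_normal \<sigma> P e \<and>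
      c = (\<lambda>j. if j < width N (Suc (depth N)) then A j e - B j e else 0))"

definition Sset :: "('a::euclidean_space) net \<Rightarrow> 'a set \<Rightarrow> nat \<Rightarrow> nat set" where
  "Sset N \<sigma> k = {j. j < width N k \<and> (\<forall>x\<in>rel_interior \<sigma>. 0 < pre N k x j)}"

text \<open>backv N S l i d: the vector D_{S_{l-d}} (W^(l-d+1))^T ... D_{S_{l-1}} (W^(l))^T e_i
  in R^{n_{l-d}} (d = 0 gives e_i in R^{n_l}).\<close>
fun backv :: "('a::euclidean_space) net \<Rightarrow> (nat \<Rightarrow> nat set) \<Rightarrow> nat \<Rightarrow> nat \<Rightarrow> nat \<Rightarrow> nat \<Rightarrow> real" where
  "backv N S l i 0 = (\<lambda>j. if j = i then 1 else 0)"
| "backv N S l i (Suc d) = (\<lambda>j. if j \<in> S (l - Suc d)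
      then (\<Sum>m<width N (l - d). Wt N (l - d) m j * backv N S l i d m) else 0)"

text \<open>(W^(1))^T D_{S_1} ... (W^(l-1))^T D_{S_{l-1}} (W^(l))^T e_i, a vector in R^{n_0}.\<close>
definition back_input :: "('a::euclidean_space) net \<Rightarrow> (nat \<Rightarrow> nat set) \<Rightarrow> nat \<Rightarrow> nat \<Rightarrow> 'a" where
  "back_input N S l i = (\<Sum>m<width N 1. backv N S l i (l - 1) m *\<^sub>R W1 N m)"

text \<open>fwdv N S l i d: W^(l+d) D_{S_{l+d-1}} ... D_{S_{l+1}} W^(l+1) e_i in R^{n_{l+d}}
  (d = 0 gives e_i in R^{n_l}; no mask is applied to e_i itself).\<close>
fun fwdv :: "('a::euclidean_space) net \<Rightarrow> (nat \<Rightarrow> nat set) \<Rightarrow> nat \<Rightarrow> nat \<Rightarrow> nat \<Rightarrow> nat \<Rightarrow> real" where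
  "fwdv N S l i 0 = (\<lambda>j. if j = i then 1 else 0)"
| "fwdv N S l i (Suc d) = (\<lambda>j. \<Sum>m<width N (l + d).
      Wt N (l + d + 1) j m * (if d = 0 \<or> m \<in> S (l + d) then fwdv N S l i d m else 0))"

definition fwd_output :: "('a::euclidean_space) net \<Rightarrow> (nat \<Rightarrow> nat set) \<Rightarrow> nat \<Rightarrow> nat \<Rightarrow> nat \<Rightarrow> real" where
  "fwd_output N S l i = fwdv N S l i (Suc (depth N) - l)"

end

theory Submission
  imports Defs
begin



lemma sgn_ok_0[simp]: "sgn_ok s 0"
  by (simp add: sgn_ok_def)

lemma sgn_ok_relu: "sgn_ok s v \<Longrightarrow> max 0 v = (if s > 0 then v else 0)"
  by (auto simp: sgn_ok_def split: if_splits)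

lemma sgn_ok_convex: "sgn_ok s p \<Longrightarrow> sgn_ok s q \<Longrightarrow> 0 \<le> a \<Longrightarrow> 0 \<le> b \<Longrightarrow> sgn_ok s (a * p + b * q)"
  by (auto simp: sgn_ok_def split: if_splits intro: add_nonneg_nonneg mult_nonneg_nonneg
      add_nonpos_nonpos mult_nonneg_nonpos)

definition cellof :: "('a::euclidean_space) net \<Rightarrow> (nat \<Rightarrow> nat \<Rightarrow> int) \<Rightarrow> nat \<Rightarrow> 'a set" where
  "cellof N s l = {x. \<forall>k j. 1 \<le> k \<longrightarrow> k \<le> l \<longrightarrow> j < width N k \<longrightarrow> sgn_ok (s k j) (pre N k x j)}"

definition sgnv :: "(nat \<Rightarrow> nat \<Rightarrow> int) \<Rightarrow> bool" where
  "sgnv s \<longleftrightarrow> (\<forall>k j. s k j \<in> {-1,0,1})"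

lemma cplx_char: "cplx N l = {cellof N s l | s. sgnv s}"
proof (induction l)
  case 0
  show ?case by (auto simp: cellof_def sgnv_def intro!: exI[of _ "\<lambda>_ _. 0"])
next
  case (Suc l)
  show ?case
  proof (rule set_eqI, rule iffI)
    fix C assume "C \<in> cplx N (Suc l)"
    then obtain R t where R: "R \<in> cplx N l" and t: "\<forall>j. t j \<in> {-1,0,1}"
      and C: "C = {x \<in> R. \<forall>j<width N (Suc l). sgn_ok (t j) (pre N (Suc l) x j)}" by auto
    from R Suc obtain s where s: "sgnv s" and Rs: "R = cellof N s l" by auto
    define s' where "s' = s(Suc l := t)"
    have "sgnv s'" using s t by (auto simp: sgnv_def s'_def)
    moreover have "C = cellof N s' (Suc l)"
      unfolding C Rs cellof_def s'_def
      by (auto simp: le_Suc_eq)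
    ultimately show "C \<in> {cellof N s (Suc l) | s. sgnv s}" by auto
  next
    fix C assume "C \<in> {cellof N s (Suc l) | s. sgnv s}"
    then obtain s where s: "sgnv s" and C: "C = cellof N s (Suc l)" by auto
    have R: "cellof N s l \<in> cplx N l" using Suc s by auto
    have "C = {x \<in> cellof N s l. \<forall>j<width N (Suc l). sgn_ok (s (Suc l) j) (pre N (Suc l) x j)}"
      unfolding C cellof_def by (auto simp: le_Suc_eq)
    moreover have "\<forall>j. s (Suc l) j \<in> {-1,0,1}" using s by (auto simp: sgnv_def)
    ultimately show "C \<in> cplx N (Suc l)" using R by auto
  qed
qed

lemma pre_Suc: "1 \<le> k \<Longrightarrow> pre N (Suc k) x j =
   (\<Sum>m<width N k. Wt N (Suc k) j m * max 0 (pre N k x m)) + bias N (Suc k) j"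
  by (cases k) auto

lemma cont_pre: "isCont (\<lambda>y. pre N k y j) x"
proof (induction k arbitrary: j rule: less_induct)
  case (less k)
  show ?case
  proof (cases k)
    case 0 then show ?thesis by simp
  next
    case (Suc k')
    show ?thesis
    proof (cases k')
      case 0 then show ?thesis using Suc by (simp add: continuous_intros)
    next
      case (Suc k'')
      have "\<And>m. isCont (\<lambda>y. pre N k' y m) x" using less \<open>k = Suc k'\<close> by simp
      then show ?thesis using \<open>k = Suc k'\<close> Suc by (simp add: continuous_intros)
    qed
  qed
qed

fun lg :: "('a::euclidean_space) net \<Rightarrow> (nat \<Rightarrow> nat set) \<Rightarrow> nat \<Rightarrow> nat \<Rightarrow> 'a" where
  "lg N T 0 j = 0"
| "lg N T (Suc 0) j = W1 N j"
| "lg N T (Suc (Suc k)) j = (\<Sum>m<width N (Suc k).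
     (Wt N (Suc (Suc k)) j m * (if m \<in> T (Suc k) then 1 else 0)) *\<^sub>R lg N T (Suc k) m)"

fun lc :: "('a::euclidean_space) net \<Rightarrow> (nat \<Rightarrow> nat set) \<Rightarrow> nat \<Rightarrow> nat \<Rightarrow> real" where
  "lc N T 0 j = 0"
| "lc N T (Suc 0) j = bias N 1 j"
| "lc N T (Suc (Suc k)) j = (\<Sum>m<width N (Suc k).
     Wt N (Suc (Suc k)) j m * (if m \<in> T (Suc k) then lc N T (Suc k) m else 0)) + bias N (Suc (Suc k)) j"

lemma lemA:
  assumes "1 \<le> k"
    and "\<And>k' m. 1 \<le> k' \<Longrightarrow> k' < k \<Longrightarrow> m < width N k' \<Longrightarrow>
           max 0 (pre N k' x m) = (if m \<in> T k' then pre N k' x m else 0)"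
  shows "pre N k x j = lg N T k j \<bullet> x + lc N T k j"
  using assms
proof (induction k arbitrary: j rule: less_induct)
  case (less k)
  show ?case
  proof (cases k)
    case 0 then show ?thesis using less by simp
  next
    case (Suc k')
    show ?thesis
    proof (cases k')
      case 0 then show ?thesis using Suc by (simp add: inner_commute)
    next
      case (Suc k'')
      have IH: "\<And>m. pre N k' x m = lg N T k' m \<bullet> x + lc N T k' m"
        using less \<open>k = Suc k'\<close> Suc by auto
      have R: "\<And>m. m < width N k' \<Longrightarrow> max 0 (pre N k' x m) = (if m \<in> T k' then pre N k' x m else 0)"
        using less(3)[of k'] \<open>k = Suc k'\<close> Suc by auto
      have "pre N k x j = (\<Sum>m<width N k'. Wt N k j m * max 0 (pre N k' x m)) + bias N k j"
        using \<open>k = Suc k'\<close> Suc by simp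
      also have "\<dots> = (\<Sum>m<width N k'. Wt N k j m * (if m \<in> T k' then lg N T k' m \<bullet> x + lc N T k' m else 0)) + bias N k j"
        using R IH by (intro arg_cong2[where f="(+)"] sum.cong) auto
      also have "\<dots> = lg N T k j \<bullet> x + lc N T k j"
        using \<open>k = Suc k'\<close> Suc
        by (simp add: inner_sum_left flip: sum.distrib) (intro sum.cong; simp add: algebra_simps)
      finally show ?thesis .
    qed
  qed
qed


definition Ts :: "(nat \<Rightarrow> nat \<Rightarrow> int) \<Rightarrow> nat \<Rightarrow> nat set" where
  "Ts s k = {m. s k m > 0}"

lemma cell_lin:
  assumes "x \<in> cellof N s l" "1 \<le> k" "k \<le> Suc l"
  shows "pre N k x j = lg N (Ts s) k j \<bullet> x + lc N (Ts s) k j"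
proof (rule lemA)
  show "1 \<le> k" by fact
  fix k' m assume "1 \<le> k'" "k' < k" "m < width N k'"
  then have "sgn_ok (s k' m) (pre N k' x m)" using assms by (auto simp: cellof_def)
  from sgn_ok_relu[OF this] show "max 0 (pre N k' x m) = (if m \<in> Ts s k' then pre N k' x m else 0)"
    by (simp add: Ts_def)
qed

lemma cellof_mono: "K \<le> L \<Longrightarrow> cellof N s L \<subseteq> cellof N s K"
  by (auto simp: cellof_def)

lemma convex_cellof: "convex (cellof N s l)"
  unfolding convex_def
proof (intro ballI allI impI)
  fix u v and a b :: real
  assume u: "u \<in> cellof N s l" and v: "v \<in> cellof N s l" and ab: "0 \<le> a" "0 \<le> b" "a + b = 1"
  define w where "w = a *\<^sub>R u + b *\<^sub>R v"
  have "\<forall>k'. 1 \<le> k' \<and> k' \<le> k \<and> k \<le> l \<longrightarrow> (\<forall>j<width N k'. sgn_ok (s k' j) (pre N k' w j))" for k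
  proof (induction k)
    case 0 then show ?case by simp
  next
    case (Suc k)
    show ?case
    proof (intro allI impI)
      fix k' j assume k': "1 \<le> k' \<and> k' \<le> Suc k \<and> Suc k \<le> l" and j: "j < width N k'"
      show "sgn_ok (s k' j) (pre N k' w j)"
      proof (cases "k' \<le> k")
        case True then show ?thesis using Suc k' j by auto
      next
        case False
        then have kk: "k' = Suc k" using k' by auto
        have wc: "w \<in> cellof N s k"
          using Suc k' by (auto simp: cellof_def)
        have "pre N k' w j = lg N (Ts s) k' j \<bullet> w + lc N (Ts s) k' j"
          using cell_lin[OF wc] k' kk by auto
        also have "\<dots> = a * (lg N (Ts s) k' j \<bullet> u + lc N (Ts s) k' j) + b * (lg N (Ts s) k' j \<bullet> v + lc N (Ts s) k' j)"
        proof -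
          have "lg N (Ts s) k' j \<bullet> w + lc N (Ts s) k' j = a * (lg N (Ts s) k' j \<bullet> u) + b * (lg N (Ts s) k' j \<bullet> v) + (a + b) * lc N (Ts s) k' j"
            using ab(3) by (simp add: w_def inner_add_right)
          then show ?thesis by (simp add: algebra_simps)
        qed
        also have "\<dots> = a * pre N k' u j + b * pre N k' v j"
          using cell_lin[OF u, of k' j] cell_lin[OF v, of k' j] k' by auto
        finally have eq: "pre N k' w j = a * pre N k' u j + b * pre N k' v j" .
        have "sgn_ok (s k' j) (pre N k' u j)" "sgn_ok (s k' j) (pre N k' v j)"
          using u k' j apply (simp add: cellof_def)
          using v k' j by (simp add: cellof_def)
        then show ?thesis unfolding eq using ab by (intro sgn_ok_convex)
      qed
    qed
  qed
  note H = this
  show "a *\<^sub>R u + b *\<^sub>R v \<in> cellof N s l"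
    unfolding w_def[symmetric] cellof_def mem_Collect_eq
  proof (intro allI impI)
    fix k j assume "1 \<le> k" "k \<le> l" "j < width N k"
    then show "sgn_ok (s k j) (pre N k w j)" using H[of l] by blast
  qed
qed

lemma sgn_neg: assumes "sgn_ok s (d*h)" "sgn_ok s h" "d < (0::real)" shows "h = 0"
proof (rule ccontr)
  assume "h \<noteq> 0"
  then have "h > 0 \<or> h < 0" by auto
  then show False
  proof
    assume "h > 0" then have "d * h < 0" using assms(3) mult_neg_pos by blast
    then show False using assms(1,2) \<open>h > 0\<close> unfolding sgn_ok_def by (auto split: if_splits)
  next
    assume "h < 0" then have "d * h > 0" using assms(3) mult_neg_neg by blast
    then show False using assms(1,2) \<open>h < 0\<close> unfolding sgn_ok_def by (auto split: if_splits)
  qed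
qed

lemma affzero:
  fixes C :: "'a::euclidean_space set"
  assumes "convex C" "x0 \<in> rel_interior C" "\<forall>y\<in>C. sgn_ok s (a \<bullet> y + c)" "a \<bullet> x0 + c = 0"
    "y \<in> C"
  shows "a \<bullet> y + c = 0"
proof -
  have "C \<noteq> {}" using assms(5) by auto
  then obtain e where e: "e > 1" "(1 - e) *\<^sub>R y + e *\<^sub>R x0 \<in> C"
    using convex_rel_interior_iff[OF assms(1)] assms(2,5) by blast
  have h: "a \<bullet> ((1 - e) *\<^sub>R y + e *\<^sub>R x0) + c = (1 - e) * (a \<bullet> y + c) + e * (a \<bullet> x0 + c)"
    by (simp add: inner_add_right algebra_simps)
  have "sgn_ok s (a \<bullet> ((1 - e) *\<^sub>R y + e *\<^sub>R x0) + c)" using assms(3) e(2) by blast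
  then have "sgn_ok s ((1 - e) * (a \<bullet> y + c))" unfolding h assms(4) by simp
  moreover have "sgn_ok s (a \<bullet> y + c)" using assms(3,5) by auto
  ultimately show ?thesis using e(1) sgn_neg[of s "1 - e" "a \<bullet> y + c"] by simp
qed

lemma bent_zero: "x \<in> bent N l i \<Longrightarrow> pre N l x i = 0"
  by (auto simp: bent_def)

lemma bentI:
  assumes "R \<in> cplx N (k - 1)" "\<sigma> \<subseteq> R" "\<forall>y\<in>\<sigma>. pre N k y m = 0" "u \<in> R" "v \<in> R"
    "pre N k u m \<noteq> pre N k v m"
  shows "\<sigma> \<subseteq> bent N k m"
  using assms unfolding bent_def by blast




locale setting =
  fixes N :: "('a::euclidean_space) net" and \<sigma> :: "'a set" and l i :: nat
    and s :: "nat \<Rightarrow> nat \<Rightarrow> int" and x0 :: 'a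
  assumes st: "supertransversal N" and sc: "\<sigma> \<in> cells N" and dim: "aff_dim \<sigma> = int DIM('a) - 1"
    and l1: "1 \<le> l" and lL: "l \<le> depth N" and iw: "i < width N l" and sb: "\<sigma> \<subseteq> bent N l i"
    and sdef: "\<sigma> = cellof N s (depth N)" and sv: "sgnv s" and x0: "x0 \<in> rel_interior \<sigma>"
begin

lemma conv: "convex \<sigma>" using sdef convex_cellof by metis

lemma x0s: "x0 \<in> \<sigma>" using x0 rel_interior_subset by blast

lemma zl: "y \<in> \<sigma> \<Longrightarrow> pre N l y i = 0" using sb bent_zero by blast

lemma uniq:
  assumes "1 \<le> k" "k \<le> depth N" "m < width N k" "\<sigma> \<subseteq> bent N k m"
  shows "k = l \<and> m = i"
proof -
  define A where "A = {(l, j). 1 \<le> l \<and> l \<le> depth N \<and> j < width N l \<and> \<sigma> \<subseteq> bent N l j}"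
  have "int (card A) = int DIM('a) - aff_dim \<sigma>"
    using st sc unfolding supertransversal_def A_def by blast
  then have "card A = 1" using dim by simp
  then obtain p where p: "A = {p}" by (rule card_1_singletonE)
  have "(l, i) \<in> A" using l1 lL iw sb by (auto simp: A_def)
  moreover have "(k, m) \<in> A" using assms by (auto simp: A_def)
  ultimately show ?thesis using p by auto
qed

lemma zero_sig:
  assumes "1 \<le> k" "k \<le> depth N" "m < width N k" "x' \<in> rel_interior \<sigma>" "pre N k x' m = 0" "y \<in> \<sigma>"
  shows "pre N k y m = 0"
proof -
  have lin: "pre N k z m = lg N (Ts s) k m \<bullet> z + lc N (Ts s) k m" if "z \<in> \<sigma>" for z
  proof -
    have zc: "z \<in> cellof N s (k - 1)"
    proof -
    have "k - 1 \<le> depth N" using assms by simp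
    from cellof_mono[OF this, of N s] that sdef show "z \<in> cellof N s (k - 1)" by blast
    qed
    then show ?thesis using cell_lin[of z N s "k - 1" k m] assms by auto
  qed
  have sg: "sgn_ok (s k m) (pre N k z m)" if "z \<in> \<sigma>" for z
    using that sdef assms by (auto simp: cellof_def)
  have "lg N (Ts s) k m \<bullet> y + lc N (Ts s) k m = 0"
    apply (rule affzero[OF conv assms(4), of "s k m"])
    using sg lin assms(5,6) rel_interior_subset[of \<sigma>] assms(4) by auto
  then show ?thesis using lin assms(6) by simp
qed

lemma Schar:
  assumes "1 \<le> k" "k \<le> depth N"
  shows "m \<in> Sset N \<sigma> k \<longleftrightarrow> m < width N k \<and> 0 < pre N k x0 m"
proof
  assume "m \<in> Sset N \<sigma> k" then show "m < width N k \<and> 0 < pre N k x0 m"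
    using x0 by (auto simp: Sset_def)
next
  assume a: "m < width N k \<and> 0 < pre N k x0 m"
  have "0 < pre N k x m" if x: "x \<in> rel_interior \<sigma>" for x
  proof (rule ccontr)
    assume "\<not> 0 < pre N k x m"
    have xs: "x \<in> \<sigma>" using x rel_interior_subset by blast
    have "sgn_ok (s k m) (pre N k x0 m)" "sgn_ok (s k m) (pre N k x m)"
      using x0s xs sdef assms a by (auto simp: cellof_def)
    then have "pre N k x m = 0" using a \<open>\<not> 0 < pre N k x m\<close> by (auto simp: sgn_ok_def split: if_splits)
    then have "pre N k x0 m = 0" using zero_sig[OF assms a[THEN conjunct1] x _ x0s] by blast
    then show False using a by simp
  qed
  then show "m \<in> Sset N \<sigma> k" using a by (auto simp: Sset_def)
qed

definition good where
  "good k m y \<longleftrightarrow> (0 < pre N k x0 m \<longrightarrow> 0 < pre N k y m) \<and> (pre N k x0 m < 0 \<longrightarrow> pre N k y m < 0)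
     \<and> (\<not> (k = l \<and> m = i) \<and> pre N k x0 m = 0 \<longrightarrow> pre N k y m = 0)"

definition goodupto where
  "goodupto K y \<longleftrightarrow> (\<forall>k m. 1 \<le> k \<longrightarrow> k \<le> K \<longrightarrow> m < width N k \<longrightarrow> good k m y)"

lemma good_sgn: "good k m y \<Longrightarrow> \<not> (k = l \<and> m = i) \<Longrightarrow> sgn_ok t (pre N k x0 m) \<Longrightarrow> sgn_ok t (pre N k y m)"
  unfolding good_def sgn_ok_def
  by (cases "0 < pre N k x0 m"; cases "pre N k x0 m < 0"; auto split: if_splits)

lemma local_cell:
  assumes "x0 \<in> cellof N t K" "goodupto K y" "l \<le> K \<longrightarrow> sgn_ok (t l i) (pre N l y i)"
  shows "y \<in> cellof N t K"
  unfolding cellof_def mem_Collect_eq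
proof (intro allI impI)
  fix k j assume k: "1 \<le> k" "k \<le> K" "j < width N k"
  show "sgn_ok (t k j) (pre N k y j)"
  proof (cases "k = l \<and> j = i")
    case True then show ?thesis using assms(3) k by auto
  next
    case False
    have "good k j y" using assms(2) k by (auto simp: goodupto_def)
    moreover have "sgn_ok (t k j) (pre N k x0 j)" using assms(1) k by (auto simp: cellof_def)
    ultimately show ?thesis using good_sgn False by blast
  qed
qed

definition smod :: "int \<Rightarrow> nat \<Rightarrow> nat \<Rightarrow> int" where
  "smod v = s(l := (s l)(i := v))"

lemma sig_sub: "K \<le> depth N \<Longrightarrow> \<sigma> \<subseteq> cellof N (smod v) K"
proof
  fix y assume K: "K \<le> depth N" and y: "y \<in> \<sigma>"
  show "y \<in> cellof N (smod v) K"
    unfolding cellof_def mem_Collect_eq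
  proof (intro allI impI)
    fix k j assume k: "1 \<le> k" "k \<le> K" "j < width N k"
    show "sgn_ok (smod v k j) (pre N k y j)"
    proof (cases "k = l \<and> j = i")
      case True then show ?thesis using zl[OF y] by simp
    next
      case False
      then have "smod v k j = s k j" by (auto simp: smod_def)
      then show ?thesis using y sdef k K by (auto simp: cellof_def)
    qed
  qed
qed

lemma sv_mod: "v \<in> {-1,0,1} \<Longrightarrow> sgnv (smod v)"
  using sv by (auto simp: sgnv_def smod_def)

lemma ev_sign:
  "eventually (\<lambda>y. (0 < pre N k x0 m \<longrightarrow> 0 < pre N k y m) \<and> (pre N k x0 m < 0 \<longrightarrow> pre N k y m < 0)) (nhds x0)"
proof -
  have t: "((\<lambda>y. pre N k y m) \<longlongrightarrow> pre N k x0 m) (nhds x0)"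
    using cont_pre[where N=N and k=k and j=m and x=x0] tendsto_at_iff_tendsto_nhds unfolding isCont_def by blast
  have 1: "eventually (\<lambda>y. 0 < pre N k x0 m \<longrightarrow> 0 < pre N k y m) (nhds x0)"
  proof (cases "0 < pre N k x0 m")
    case True show ?thesis using order_tendstoD(1)[OF t True] by (auto elim: eventually_mono)
  qed simp
  have 2: "eventually (\<lambda>y. pre N k x0 m < 0 \<longrightarrow> pre N k y m < 0) (nhds x0)"
  proof (cases "pre N k x0 m < 0")
    case True show ?thesis using order_tendstoD(2)[OF t True] by (auto elim: eventually_mono)
  qed simp
  show ?thesis using eventually_conj[OF 1 2] .
qed

lemma ev_good: "K \<le> depth N \<Longrightarrow> eventually (goodupto K) (nhds x0)"
proof (induction K)
  case 0 then show ?case by (simp add: goodupto_def)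
next
  case (Suc K)
  have IH: "eventually (goodupto K) (nhds x0)" using Suc by simp
  have each: "eventually (good (Suc K) m) (nhds x0)" if m: "m < width N (Suc K)" for m
  proof -
    have z: "eventually (\<lambda>y. \<not> (Suc K = l \<and> m = i) \<and> pre N (Suc K) x0 m = 0 \<longrightarrow> pre N (Suc K) y m = 0) (nhds x0)"
    proof (cases "\<not> (Suc K = l \<and> m = i) \<and> pre N (Suc K) x0 m = 0")
      case False then show ?thesis by (intro always_eventually) auto
    next
      case True
      have nb: "\<not> \<sigma> \<subseteq> bent N (Suc K) m" using uniq[of "Suc K" m] True Suc.prems m by auto
      have zs: "\<forall>y\<in>\<sigma>. pre N (Suc K) y m = 0"
        using zero_sig[of "Suc K" m x0] True Suc.prems m x0 by auto
      have const: "\<forall>u\<in>cellof N (smod v) K. \<forall>w\<in>cellof N (smod v) K. pre N (Suc K) u m = pre N (Suc K) w m"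
        if v: "v \<in> {-1,0,1}" for v
      proof (rule ccontr)
        assume "\<not> ?thesis"
        then obtain u w where uw: "u \<in> cellof N (smod v) K" "w \<in> cellof N (smod v) K"
          "pre N (Suc K) u m \<noteq> pre N (Suc K) w m" by blast
        have "cellof N (smod v) K \<in> cplx N (Suc K - 1)" using sv_mod[OF v] cplx_char by auto
        then have "\<sigma> \<subseteq> bent N (Suc K) m"
          using bentI[OF _ sig_sub zs uw] Suc.prems by auto
        then show False using nb by blast
      qed
      have x0p: "x0 \<in> cellof N (smod 1) K" "x0 \<in> cellof N (smod (-1)) K"
        using sig_sub[of K] Suc.prems x0s by auto
      have "eventually (\<lambda>y. pre N (Suc K) y m = 0) (nhds x0)"
      proof (rule eventually_mono[OF IH])
        fix y assume g: "goodupto K y"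
        show "pre N (Suc K) y m = 0"
        proof (cases "pre N l y i \<ge> 0")
          case True
          have "y \<in> cellof N (smod 1) K"
            by (rule local_cell[OF x0p(1) g]) (use True in \<open>auto simp: smod_def sgn_ok_def\<close>)
          moreover have "\<forall>u\<in>cellof N (smod 1) K. \<forall>w\<in>cellof N (smod 1) K. pre N (Suc K) u m = pre N (Suc K) w m"
            by (rule const) simp
          ultimately have "pre N (Suc K) y m = pre N (Suc K) x0 m" using x0p(1) by blast
          then show ?thesis using \<open>\<not> (Suc K = l \<and> m = i) \<and> pre N (Suc K) x0 m = 0\<close> by simp
        next
          case False
          have "y \<in> cellof N (smod (-1)) K"
            by (rule local_cell[OF x0p(2) g]) (use False in \<open>auto simp: smod_def sgn_ok_def\<close>)
          moreover have "\<forall>u\<in>cellof N (smod (-1)) K. \<forall>w\<in>cellof N (smod (-1)) K. pre N (Suc K) u m = pre N (Suc K) w m"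
            by (rule const) simp
          ultimately have "pre N (Suc K) y m = pre N (Suc K) x0 m" using x0p(2) by blast
          then show ?thesis using \<open>\<not> (Suc K = l \<and> m = i) \<and> pre N (Suc K) x0 m = 0\<close> by simp
        qed
      qed
      then show ?thesis by (auto elim: eventually_mono)
    qed
    from eventually_conj[OF ev_sign[of "Suc K" m] z] show ?thesis
      by (rule eventually_mono) (simp add: good_def)
  qed
  have "eventually (\<lambda>y. \<forall>m\<in>{..<width N (Suc K)}. good (Suc K) m y) (nhds x0)"
    by (rule eventually_ball_finite) (use each in auto)
  from eventually_conj[OF IH this] show ?case
  proof (rule eventually_mono)
    fix y assume "goodupto K y \<and> (\<forall>m\<in>{..<width N (Suc K)}. good (Suc K) m y)"
    then show "goodupto (Suc K) y" unfolding goodupto_def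
      by (metis le_SucE lessThan_iff)
  qed
qed

end



lemma back_gen:
  assumes "1 \<le> l" "i < width N l" "d \<le> l - 1"
  shows "lg N T l i = (\<Sum>m<width N (l - d). backv N T l i d m *\<^sub>R lg N T (l - d) m)"
  using assms(3)
proof (induction d)
  case 0
  have "(\<Sum>m<width N l. backv N T l i 0 m *\<^sub>R lg N T l m) = (\<Sum>m<width N l. if m = i then lg N T l m else 0)"
    by (intro sum.cong) auto
  also have "\<dots> = lg N T l i" using assms(2) by simp
  finally show ?case by simp
next
  case (Suc d)
  obtain q where q: "l - d = Suc (Suc q)" using Suc.prems assms(1)
    by (metis Suc_diff_Suc Suc_le_eq diff_diff_cancel diff_le_self le_add_diff_inverse2 less_imp_le_nat
        nat_less_le not_less_eq_eq plus_1_eq_Suc)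
  have q2: "l - Suc d = Suc q" using q by simp
  have "lg N T l i = (\<Sum>m<width N (l - d). backv N T l i d m *\<^sub>R lg N T (l - d) m)"
    using Suc by simp
  also have "\<dots> = (\<Sum>m<width N (l - d). \<Sum>m'<width N (Suc q).
       (backv N T l i d m * (Wt N (l - d) m m' * (if m' \<in> T (Suc q) then 1 else 0))) *\<^sub>R lg N T (Suc q) m')"
    unfolding q by (simp add: scaleR_sum_right)
  also have "\<dots> = (\<Sum>m'<width N (Suc q). \<Sum>m<width N (l - d).
       (backv N T l i d m * (Wt N (l - d) m m' * (if m' \<in> T (Suc q) then 1 else 0))) *\<^sub>R lg N T (Suc q) m')"
    by (rule sum.swap)
  also have "\<dots> = (\<Sum>m'<width N (Suc q). backv N T l i (Suc d) m' *\<^sub>R lg N T (Suc q) m')"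
    by (intro sum.cong refl) (simp add: q2 scaleR_sum_left[symmetric] sum_distrib_left algebra_simps)
  finally show ?case using q2 by simp
qed

lemma back_eq:
  assumes "1 \<le> l" "i < width N l"
  shows "lg N T l i = back_input N T l i"
proof -
  have "lg N T l i = (\<Sum>m<width N (l - (l - 1)). backv N T l i (l - 1) m *\<^sub>R lg N T (l - (l - 1)) m)"
    using back_gen[OF assms, of "l - 1" T] by simp
  also have "\<dots> = back_input N T l i"
    using assms(1) by (simp add: back_input_def)
  finally show ?thesis .
qed

lemma D_step:
  assumes "1 \<le> k"
  shows "pre N (Suc k) a j + pre N (Suc k) b j - 2 * pre N (Suc k) c j =
    (\<Sum>m<width N k. Wt N (Suc k) j m * (max 0 (pre N k a m) + max 0 (pre N k b m) - 2 * max 0 (pre N k c m)))"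
  using assms by (simp add: pre_Suc algebra_simps sum.distrib sum_subtractf sum_distrib_left)




locale setting2 = setting +
  fixes r :: real
  assumes r: "r > 0" and rball: "\<And>y. dist y x0 < r \<Longrightarrow> goodupto (depth N) y"
begin

abbreviation "S \<equiv> Sset N \<sigma>"
abbreviation "g \<equiv> lg N (Sset N \<sigma>) l i"

lemma relu_id:
  assumes "goodupto (depth N) y" "1 \<le> k" "k \<le> depth N" "m < width N k" "\<not> (k = l \<and> m = i)"
  shows "max 0 (pre N k y m) = (if m \<in> S k then pre N k y m else 0)"
proof -
  have gd: "good k m y" using assms by (auto simp: goodupto_def)
  have "m \<in> S k \<longleftrightarrow> 0 < pre N k x0 m" using Schar[OF assms(2,3)] assms(4) by simp
  then show ?thesis using gd assms(5) unfolding good_def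
    by (cases "0 < pre N k x0 m"; cases "pre N k x0 m < 0") auto
qed

lemma gx0: "goodupto (depth N) x0" using rball r by simp

lemma lin_l:
  assumes "goodupto (depth N) y"
  shows "pre N l y i = g \<bullet> (y - x0)"
proof -
  have h: "pre N l z i = g \<bullet> z + lc N S l i" if "goodupto (depth N) z" for z
    by (rule lemA[OF l1]) (use relu_id[OF that] lL in auto)
  have "pre N l x0 i = 0" using zl x0s by blast
  then show ?thesis using h[OF assms] h[OF gx0] by (simp add: inner_diff_right)
qed

lemma gball: "dist y x0 < r \<Longrightarrow> pre N l y i = g \<bullet> (y - x0)"
  using lin_l rball by blast

lemma ball_in_cell:
  assumes "x0 \<in> cellof N t (depth N)" "dist y x0 < r" "sgn_ok (t l i) (g \<bullet> (y - x0))"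
  shows "y \<in> cellof N t (depth N)"
  using local_cell[OF assms(1) rball[OF assms(2)]] assms gball by auto

lemma g_nz: "g \<noteq> 0"
proof
  assume g0: "g = 0"
  have "ball x0 r \<subseteq> \<sigma>"
  proof
    fix y assume "y \<in> ball x0 r"
    then have "dist y x0 < r" by (simp add: dist_commute)
    then show "y \<in> \<sigma>" using ball_in_cell[of s y] x0s sdef g0 by auto
  qed
  then have "aff_dim (ball x0 r) \<le> aff_dim \<sigma>" by (rule aff_dim_subset)
  moreover have "aff_dim (ball x0 r) = DIM('a)" using r by (intro aff_dim_open) auto
  ultimately show False using dim by simp
qed

lemma seg:
  assumes "convex C" "x0 \<in> C" "p \<in> C"
  shows "\<exists>\<epsilon>>0. x0 + \<epsilon> *\<^sub>R (p - x0) \<in> C \<and> dist (x0 + \<epsilon> *\<^sub>R (p - x0)) x0 < r"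
proof -
  define \<epsilon> where "\<epsilon> = min 1 (r / (2 * (norm (p - x0) + 1)))"
  have np: "0 < 2 * (norm (p - x0) + 1)" by (smt (verit) norm_ge_zero)
  have e0: "\<epsilon> > 0" "\<epsilon> \<le> 1" using r np by (auto simp: \<epsilon>_def)
  have "x0 + \<epsilon> *\<^sub>R (p - x0) = (1 - \<epsilon>) *\<^sub>R x0 + \<epsilon> *\<^sub>R p" by (simp add: algebra_simps)
  then have in1: "x0 + \<epsilon> *\<^sub>R (p - x0) \<in> C" using convexD[OF assms(1) assms(2,3)] e0 by auto
  have "dist (x0 + \<epsilon> *\<^sub>R (p - x0)) x0 = \<epsilon> * norm (p - x0)" using e0 by (simp add: dist_norm)
  also have "\<dots> \<le> (r / (2 * (norm (p - x0) + 1))) * norm (p - x0)"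
    by (intro mult_right_mono) (auto simp: \<epsilon>_def)
  also have "\<dots> < r"
  proof -
    have "norm (p - x0) < 2 * (norm (p - x0) + 1)" by (smt (verit) norm_ge_zero)
    then have "norm (p - x0) / (2 * (norm (p - x0) + 1)) < 1" using np by (simp add: divide_less_eq)
    then show ?thesis using r by (simp add: mult.commute mult_strict_left_mono)
       (metis mult.right_neutral mult_strict_left_mono times_divide_eq_right)
  qed
  finally show ?thesis using e0 in1 by blast
qed

lemma D_low:
  assumes "dist y1 x0 < r" "dist y2 x0 < r" "y1 + y2 = 2 *\<^sub>R x0"
  shows "1 \<le> k \<Longrightarrow> k \<le> l \<Longrightarrow> pre N k y1 j + pre N k y2 j - 2 * pre N k x0 j = 0"
proof (induction k arbitrary: j)
  case 0 then show ?case by simp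
next
  case (Suc k)
  show ?case
  proof (cases k)
    case 0
    have "W1 N j \<bullet> y1 + W1 N j \<bullet> y2 = 2 * (W1 N j \<bullet> x0)"
      using arg_cong[OF assms(3), of "\<lambda>v. W1 N j \<bullet> v"] by (simp add: inner_add_right)
    then show ?thesis using 0 by (simp add: inner_commute algebra_simps)
  next
    case (Suc k')
    then have k1: "1 \<le> k" by simp
    have "pre N (Suc k) y1 j + pre N (Suc k) y2 j - 2 * pre N (Suc k) x0 j =
      (\<Sum>m<width N k. Wt N (Suc k) j m * (max 0 (pre N k y1 m) + max 0 (pre N k y2 m) - 2 * max 0 (pre N k x0 m)))"
      by (rule D_step[OF k1])
    also have "\<dots> = (\<Sum>m<width N k. Wt N (Suc k) j m * (if m \<in> S k then pre N k y1 m + pre N k y2 m - 2 * pre N k x0 m else 0))"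
      using relu_id[OF rball[OF assms(1)]] relu_id[OF rball[OF assms(2)]] relu_id[OF gx0] k1 Suc.prems lL
      by (intro sum.cong refl) auto
    also have "\<dots> = (\<Sum>m<width N k. (0::real))"
    proof (intro sum.cong refl)
      fix m
      have "pre N k y1 m + pre N k y2 m - 2 * pre N k x0 m = 0" using Suc.IH k1 Suc.prems by simp
      then show "Wt N (Suc k) j m * (if m \<in> S k then pre N k y1 m + pre N k y2 m - 2 * pre N k x0 m else 0) = 0"
        by simp
    qed
    also have "\<dots> = 0" by simp
    finally show ?thesis .
  qed
qed

lemma D_high:
  assumes "dist y1 x0 < r" "dist y2 x0 < r" "y1 + y2 = 2 *\<^sub>R x0" "pre N l y1 i = a" "pre N l y2 i = - a"
  shows "1 \<le> d \<Longrightarrow> l + d \<le> Suc (depth N) \<Longrightarrow>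
     pre N (l + d) y1 j + pre N (l + d) y2 j - 2 * pre N (l + d) x0 j = \<bar>a\<bar> * fwdv N S l i d j"
proof (induction d arbitrary: j)
  case 0 then show ?case by simp
next
  case (Suc d)
  have px0: "pre N l x0 i = 0" using zl x0s by blast
  have "pre N (Suc (l + d)) y1 j + pre N (Suc (l + d)) y2 j - 2 * pre N (Suc (l + d)) x0 j =
      (\<Sum>m<width N (l + d). Wt N (Suc (l + d)) j m * (max 0 (pre N (l + d) y1 m) + max 0 (pre N (l + d) y2 m) - 2 * max 0 (pre N (l + d) x0 m)))"
    by (rule D_step) (use l1 in simp)
  also have "\<dots> = \<bar>a\<bar> * fwdv N S l i (Suc d) j"
  proof (cases d)
    case 0
    have "(\<Sum>m<width N l. Wt N (Suc l) j m * (max 0 (pre N l y1 m) + max 0 (pre N l y2 m) - 2 * max 0 (pre N l x0 m)))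
        = (\<Sum>m<width N l. if m = i then Wt N (Suc l) j m * \<bar>a\<bar> else 0)"
    proof (intro sum.cong refl)
      fix m assume m: "m \<in> {..<width N l}"
      show "Wt N (Suc l) j m * (max 0 (pre N l y1 m) + max 0 (pre N l y2 m) - 2 * max 0 (pre N l x0 m)) =
         (if m = i then Wt N (Suc l) j m * \<bar>a\<bar> else 0)"
      proof (cases "m = i")
        case True then show ?thesis using assms(4,5) px0 by (simp add: max_def abs_if)
      next
        case False
        have "max 0 (pre N l y1 m) + max 0 (pre N l y2 m) - 2 * max 0 (pre N l x0 m) =
              (if m \<in> S l then pre N l y1 m + pre N l y2 m - 2 * pre N l x0 m else 0)"
          using relu_id[OF rball[OF assms(1)]] relu_id[OF rball[OF assms(2)]] relu_id[OF gx0] l1 lL m False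
          by auto
        also have "\<dots> = 0" using D_low[OF assms(1,2,3)] l1 by simp
        finally show ?thesis using False by simp
      qed
    qed
    also have "\<dots> = Wt N (Suc l) j i * \<bar>a\<bar>" using iw by simp
    moreover have "fwdv N S l i (Suc 0) j = (\<Sum>m<width N l. Wt N (Suc l) j m * (if m = i then 1 else 0))"
      by simp
    moreover have "(\<Sum>m<width N l. Wt N (Suc l) j m * (if m = i then 1 else 0)) = (\<Sum>m<width N l. if m = i then Wt N (Suc l) j m else 0)"
      by (rule sum.cong) simp_all
    moreover have "(\<Sum>m<width N l. if m = i then Wt N (Suc l) j m else 0) = Wt N (Suc l) j i"
      using iw by (subst sum.delta) auto
    ultimately show ?thesis using 0 by simp
  next
    case (Suc d')
    then have d1: "1 \<le> d" by simp
    have "(\<Sum>m<width N (l + d). Wt N (Suc (l + d)) j m * (max 0 (pre N (l + d) y1 m) + max 0 (pre N (l + d) y2 m) - 2 * max 0 (pre N (l + d) x0 m)))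
       = (\<Sum>m<width N (l + d). Wt N (Suc (l + d)) j m * (if m \<in> S (l + d) then \<bar>a\<bar> * fwdv N S l i d m else 0))"
    proof (intro sum.cong refl)
      fix m assume m: "m \<in> {..<width N (l + d)}"
      have "max 0 (pre N (l + d) y1 m) + max 0 (pre N (l + d) y2 m) - 2 * max 0 (pre N (l + d) x0 m) =
              (if m \<in> S (l + d) then pre N (l + d) y1 m + pre N (l + d) y2 m - 2 * pre N (l + d) x0 m else 0)"
        using relu_id[OF rball[OF assms(1)]] relu_id[OF rball[OF assms(2)]] relu_id[OF gx0] l1 m d1 Suc.prems
        by auto
      also have "\<dots> = (if m \<in> S (l + d) then \<bar>a\<bar> * fwdv N S l i d m else 0)"
        using Suc.IH d1 Suc.prems by simp
      finally show "Wt N (Suc (l + d)) j m * (max 0 (pre N (l + d) y1 m) + max 0 (pre N (l + d) y2 m) - 2 * max 0 (pre N (l + d) x0 m))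
         = Wt N (Suc (l + d)) j m * (if m \<in> S (l + d) then \<bar>a\<bar> * fwdv N S l i d m else 0)" by simp
    qed
    also have "\<dots> = \<bar>a\<bar> * fwdv N S l i (Suc d) j"
      using d1 by (simp add: sum_distrib_left algebra_simps if_distrib cong: if_cong)
    finally show ?thesis .
  qed
  finally show ?case by simp
qed

end



context setting2
begin

lemma cell_ball:
  assumes "x0 \<in> cellof N t (depth N)" "dist y x0 < r"
  shows "y \<in> cellof N t (depth N) \<longleftrightarrow> sgn_ok (t l i) (g \<bullet> (y - x0))"
proof
  assume "y \<in> cellof N t (depth N)"
  then have "sgn_ok (t l i) (pre N l y i)" using l1 lL iw by (auto simp: cellof_def)
  then show "sgn_ok (t l i) (g \<bullet> (y - x0))" using gball[OF assms(2)] by simp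
qed (rule ball_in_cell[OF assms])

lemma cells_obtain:
  assumes "P \<in> cells N"
  obtains t where "sgnv t" "P = cellof N t (depth N)"
  using assms cplx_char[of N "depth N"] unfolding cells_def by auto

lemma sign_nz:
  assumes "P = cellof N t (depth N)" "sgnv t" "x0 \<in> P" "aff_dim P = DIM('a)"
  shows "t l i = 1 \<or> t l i = -1"
proof -
  have tv: "t l i \<in> {-1,0,1}" using assms(2) by (auto simp: sgnv_def)
  have "t l i \<noteq> 0"
  proof
    assume t0: "t l i = 0"
    have "P \<subseteq> {y. g \<bullet> y = g \<bullet> x0}"
    proof
      fix p assume p: "p \<in> P"
      obtain \<epsilon> where e: "\<epsilon> > 0" "x0 + \<epsilon> *\<^sub>R (p - x0) \<in> P" "dist (x0 + \<epsilon> *\<^sub>R (p - x0)) x0 < r"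
        using seg[OF _ assms(3) p] assms(1) convex_cellof by blast
      have "sgn_ok (t l i) (g \<bullet> (x0 + \<epsilon> *\<^sub>R (p - x0) - x0))"
        using cell_ball[OF assms(3)[unfolded assms(1)] e(3)] e(2) assms(1) by blast
      then have "\<epsilon> * (g \<bullet> (p - x0)) = 0" using t0 by (simp add: sgn_ok_def)
      then show "p \<in> {y. g \<bullet> y = g \<bullet> x0}" using e(1) by (simp add: inner_diff_right)
    qed
    then have "aff_dim P \<le> aff_dim {y. g \<bullet> y = g \<bullet> x0}" by (rule aff_dim_subset)
    also have "\<dots> = DIM('a) - 1" using g_nz by simp
    finally show False using assms(4) by simp
  qed
  then show ?thesis using tv by auto
qed

definition u where "u = (1 / norm g) *\<^sub>R g"

lemma u_props: "norm u = 1" "g \<bullet> u = norm g"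
  using g_nz by (auto simp: u_def norm_scaleR inner_commute power2_norm_eq_inner[symmetric] power2_eq_square)

lemma pt_props:
  assumes "\<bar>h\<bar> < r"
  shows "dist (x0 + h *\<^sub>R u) x0 < r" "g \<bullet> (x0 + h *\<^sub>R u - x0) = h * norm g"
  using assms u_props by (auto simp: dist_norm)

lemma sgn_ok_pm:
  assumes "v = 1 \<or> v = -1" "0 < c"
  shows "sgn_ok v (of_int v * c)"
  using assms by (auto simp: sgn_ok_def)

end



context setting2
begin

lemma wit_value:
  assumes P: "P \<in> cells N" and Q: "Q \<in> cells N" and dP: "aff_dim P = DIM('a)" and dQ: "aff_dim Q = DIM('a)"
    and PQ: "\<sigma> = P \<inter> Q" and AP: "lin_part N P A" and BQ: "lin_part N Q B" and un: "unit_normal \<sigma> P e"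
    and j: "j < width N (Suc (depth N))"
  shows "A j e - B j e = norm g * fwd_output N S l i j"
proof -
  obtain sP where sP: "sgnv sP" "P = cellof N sP (depth N)" using cells_obtain[OF P] by blast
  obtain sQ where sQ: "sgnv sQ" "Q = cellof N sQ (depth N)" using cells_obtain[OF Q] by blast
  have x0P: "x0 \<in> P" and x0Q: "x0 \<in> Q" using x0s PQ by auto
  have vP: "sP l i = 1 \<or> sP l i = -1" using sign_nz[OF sP(2) sP(1) x0P dP] .
  have vQ: "sQ l i = 1 \<or> sQ l i = -1" using sign_nz[OF sQ(2) sQ(1) x0Q dQ] .
  define v where "v = sP l i"
  have hr: "\<bar>r / 2\<bar> < r" "\<bar>of_int v * (r / 2)\<bar> < r" using r vP by (auto simp: v_def)
  define z where "z = x0 + (of_int v * (r / 2)) *\<^sub>R u"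
  have gz: "g \<bullet> (z - x0) = of_int v * (r / 2 * norm g)" using pt_props(2)[OF hr(2)] by (simp add: z_def)
  have sz: "sgn_ok v (g \<bullet> (z - x0))" unfolding gz
    using sgn_ok_pm[of v "r / 2 * norm g"] vP r g_nz by (simp add: v_def)
  have dz: "dist z x0 < r" unfolding z_def by (rule pt_props(1)[OF hr(2)])
  have zP: "z \<in> P"
    using cell_ball[OF x0P[unfolded sP(2)] dz] sP(2) sz by (simp add: v_def)
  have vQ': "sQ l i = - v"
  proof (rule ccontr)
    assume "sQ l i \<noteq> - v"
    then have "sQ l i = v" using vP vQ by (auto simp: v_def)
    then have "z \<in> Q"
      using cell_ball[OF x0Q[unfolded sQ(2)] dz] sQ(2) sz by simp
    then have "z \<in> \<sigma>" using zP PQ by auto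
    then have "pre N l z i = 0" by (rule zl)
    moreover have "pre N l z i = of_int v * (r / 2 * norm g)"
      using gball[OF pt_props(1)[OF hr(2)]] gz by (simp add: z_def)
    ultimately show False using vP r g_nz by (auto simp: v_def)
  qed
  have ne: "norm e = 1" and eperp: "\<And>a b. a \<in> \<sigma> \<Longrightarrow> b \<in> \<sigma> \<Longrightarrow> e \<bullet> (a - b) = 0"
    and epos: "\<And>a b. a \<in> \<sigma> \<Longrightarrow> b \<in> P \<Longrightarrow> e \<bullet> (b - a) \<ge> 0"
    using un unfolding unit_normal_def by auto
  have perp: "e \<bullet> w = 0" if w: "g \<bullet> w = 0" for w
  proof -
    obtain \<epsilon> where e1: "\<epsilon> > 0" "dist (x0 + \<epsilon> *\<^sub>R (x0 + w - x0)) x0 < r"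
      using seg[of UNIV "x0 + w"] by auto
    let ?z = "x0 + \<epsilon> *\<^sub>R w"
    have gz0: "g \<bullet> (?z - x0) = 0" using w by simp
    have "?z \<in> P" using cell_ball[OF x0P[unfolded sP(2)]] e1 gz0 sP(2) by simp
    moreover have "?z \<in> Q" using cell_ball[OF x0Q[unfolded sQ(2)]] e1 gz0 sQ(2) by simp
    ultimately have "?z \<in> \<sigma>" using PQ by auto
    then have "e \<bullet> (?z - x0) = 0" using eperp x0s by blast
    then show ?thesis using e1(1) by simp
  qed
  have absg: "\<bar>g \<bullet> e\<bar> = norm g"
  proof -
    define w where "w = e - ((e \<bullet> g) / (g \<bullet> g)) *\<^sub>R g"
    have gg: "g \<bullet> g \<noteq> 0" using g_nz by simp
    have "g \<bullet> w = 0" using gg by (simp add: w_def inner_diff_right inner_commute)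
    then have "e \<bullet> w = 0" by (rule perp)
    then have "e \<bullet> e = (e \<bullet> g) * (e \<bullet> g) / (g \<bullet> g)" by (simp add: w_def inner_diff_right)
    then have "(e \<bullet> g)\<^sup>2 = (norm g)\<^sup>2" using ne gg
      by (simp add: power2_norm_eq_inner[symmetric] power2_eq_square field_simps)
    then show ?thesis by (metis abs_norm_cancel inner_commute power2_eq_iff_nonneg abs_ge_zero norm_ge_zero power2_abs)
  qed
  have vsign: "of_int v * (g \<bullet> e) \<ge> 0"
  proof -
    have "e \<bullet> (z - x0) \<ge> 0" using epos[OF x0s zP] .
    then have "of_int v * (r / 2) * (e \<bullet> u) \<ge> 0" by (simp add: z_def)
    then have "of_int v * (r / 2) * (g \<bullet> e) / norm g \<ge> 0"
      by (simp add: u_def inner_commute)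
    moreover have ng: "norm g > 0" using g_nz by simp
    ultimately have "(r / 2) * (of_int v * (g \<bullet> e)) \<ge> 0"
      by (simp add: zero_le_divide_iff mult.assoc mult.left_commute)
    then show ?thesis using r by (simp add: zero_le_mult_iff)
  qed
  define t where "t = r / 2"
  have t0: "t > 0" using r by (simp add: t_def)
  define y1 where "y1 = x0 + t *\<^sub>R e"
  define y2 where "y2 = x0 - t *\<^sub>R e"
  have d1: "dist y1 x0 < r" and d2: "dist y2 x0 < r" using ne r by (auto simp: y1_def y2_def t_def dist_norm)
  have sum12: "y1 + y2 = 2 *\<^sub>R x0" by (simp add: y1_def y2_def scaleR_2)
  have p1: "pre N l y1 i = t * (g \<bullet> e)" using gball[OF d1] by (simp add: y1_def)
  have p2: "pre N l y2 i = - (t * (g \<bullet> e))" using gball[OF d2] by (simp add: y2_def)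
  have y1P: "y1 \<in> P"
  proof -
    have "sgn_ok (sP l i) (g \<bullet> (y1 - x0))"
      using vP vsign t0 by (auto simp: v_def y1_def sgn_ok_def mult_nonneg_nonneg mult_nonneg_nonpos)
    then show ?thesis using cell_ball[OF x0P[unfolded sP(2)] d1] sP(2) by simp
  qed
  have y2Q: "y2 \<in> Q"
  proof -
    have "sgn_ok (sQ l i) (g \<bullet> (y2 - x0))"
      using vP vQ' vsign t0 by (auto simp: v_def y2_def sgn_ok_def mult_nonneg_nonneg mult_nonneg_nonpos)
    then show ?thesis using cell_ball[OF x0Q[unfolded sQ(2)] d2] sQ(2) by simp
  qed
  define d where "d = Suc (depth N) - l"
  have dd: "1 \<le> d" "l + d = Suc (depth N)" using lL by (auto simp: d_def)
  have D: "fnet N y1 j + fnet N y2 j - 2 * fnet N x0 j = \<bar>t * (g \<bullet> e)\<bar> * fwd_output N S l i j"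
    using D_high[OF d1 d2 sum12 p1 p2 dd(1), of j] dd by (simp add: fnet_def fwd_output_def d_def)
  obtain bP where bP: "\<forall>x\<in>P. \<forall>j<width N (Suc (depth N)). fnet N x j = A j x + bP j" and lA: "linear (A j)"
    using AP unfolding lin_part_def by blast
  obtain bQ where bQ: "\<forall>x\<in>Q. \<forall>j<width N (Suc (depth N)). fnet N x j = B j x + bQ j" and lB: "linear (B j)"
    using BQ unfolding lin_part_def by blast
  have c1: "A j y1 = A j x0 + t * A j e" using lA by (simp add: y1_def linear_add linear_scale)
  have c2: "B j y2 = B j x0 - t * B j e" using lB by (simp add: y2_def linear_diff linear_scale)
  have "t * (A j e - B j e) = fnet N y1 j + fnet N y2 j - 2 * fnet N x0 j"
  proof -
    note calc = c1 c2
    have "fnet N y1 j = A j y1 + bP j" "fnet N x0 j = A j x0 + bP j"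
      using bP y1P x0P j by auto
    moreover have "fnet N y2 j = B j y2 + bQ j" "fnet N x0 j = B j x0 + bQ j"
      using bQ y2Q x0Q j by auto
    ultimately show ?thesis using calc by (simp add: algebra_simps)
  qed
  also have "\<dots> = t * (norm g * fwd_output N S l i j)" using D absg t0 by (simp add: abs_mult)
  finally show ?thesis using t0 by simp
qed

end



context setting2
begin

lemma fullball:
  assumes v: "v = 1 \<or> v = -1" and y: "y \<in> ball (x0 + (of_int v * (r / 2)) *\<^sub>R u) (r / 4)"
  shows "y \<in> cellof N (smod v) (depth N)"
proof -
  define c where "c = x0 + (of_int v * (r / 2)) *\<^sub>R u"
  have hv: "\<bar>of_int v * (r / 2)\<bar> < r" "\<bar>of_int v * (r / 2)\<bar> = r / 2" using v r by auto
  have dyc: "dist y c < r / 4" using y by (simp add: c_def dist_commute)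
  have dcx: "dist c x0 = r / 2" using hv u_props by (simp add: c_def dist_norm)
  have dyx: "dist y x0 < r" using dist_triangle[of y x0 c] dyc dcx r by linarith
  have gc: "g \<bullet> (c - x0) = of_int v * (r / 2) * norm g" using pt_props(2)[OF hv(1)] by (simp add: c_def)
  have cs: "\<bar>g \<bullet> (y - c)\<bar> \<le> norm g * norm (y - c)" by (rule Cauchy_Schwarz_ineq2)
  have "norm g * norm (y - c) < norm g * (r / 4)"
    using dyc g_nz by (simp add: dist_norm)
  then have cs2: "\<bar>g \<bullet> (y - c)\<bar> < norm g * (r / 4)" using cs by linarith
  have split: "g \<bullet> (y - x0) = g \<bullet> (y - c) + g \<bullet> (c - x0)" by (simp add: inner_diff_right)
  have ng: "norm g > 0" using g_nz by simp
  have cs3: "- (norm g * (r / 4)) < g \<bullet> (y - c)" "g \<bullet> (y - c) < norm g * (r / 4)"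
    using cs2 by (auto simp: abs_less_iff)
  have nr: "norm g * r > 0" using ng r by simp
  have "sgn_ok v (g \<bullet> (y - x0))"
    using v
  proof
    assume v1: "v = 1"
    have "g \<bullet> (c - x0) = (norm g * r) / 2" using gc v1 by simp
    moreover have "norm g * (r / 4) = (norm g * r) / 4" by simp
    ultimately have "g \<bullet> (y - x0) > 0" using split cs3 nr by linarith
    then show ?thesis using v1 by (simp add: sgn_ok_def)
  next
    assume v1: "v = -1"
    have "g \<bullet> (c - x0) = - (norm g * r) / 2" using gc v1 by simp
    moreover have "norm g * (r / 4) = (norm g * r) / 4" by simp
    ultimately have "g \<bullet> (y - x0) < 0" using split cs3 nr by linarith
    then show ?thesis using v1 by (simp add: sgn_ok_def)
  qed
  moreover have "x0 \<in> cellof N (smod v) (depth N)" using sig_sub x0s by blast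
  ultimately show ?thesis using cell_ball[OF _ dyx] by (simp add: smod_def)
qed

lemma fulldim:
  assumes v: "v = 1 \<or> v = -1"
  shows "aff_dim (cellof N (smod v) (depth N)) = DIM('a)"
proof -
  have "ball (x0 + (of_int v * (r / 2)) *\<^sub>R u) (r / 4) \<subseteq> cellof N (smod v) (depth N)"
    using fullball[OF v] by blast
  then have "aff_dim (ball (x0 + (of_int v * (r / 2)) *\<^sub>R u) (r / 4)) \<le> aff_dim (cellof N (smod v) (depth N))"
    by (rule aff_dim_subset)
  moreover have "aff_dim (ball (x0 + (of_int v * (r / 2)) *\<^sub>R u) (r / 4)) = DIM('a)"
    using r by (intro aff_dim_open) auto
  ultimately show ?thesis using aff_dim_le_DIM[of "cellof N (smod v) (depth N)"] by linarith
qed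

lemma g_perp: "a \<in> \<sigma> \<Longrightarrow> g \<bullet> (a - x0) = 0"
proof -
  assume a: "a \<in> \<sigma>"
  obtain \<epsilon> where e: "\<epsilon> > 0" "x0 + \<epsilon> *\<^sub>R (a - x0) \<in> \<sigma>" "dist (x0 + \<epsilon> *\<^sub>R (a - x0)) x0 < r"
    using seg[OF conv x0s a] by blast
  have "pre N l (x0 + \<epsilon> *\<^sub>R (a - x0)) i = 0" using zl[OF e(2)] .
  then have "\<epsilon> * (g \<bullet> (a - x0)) = 0" using gball[OF e(3)] by simp
  then show ?thesis using e(1) by simp
qed

lemma g_pos: "p \<in> cellof N (smod 1) (depth N) \<Longrightarrow> g \<bullet> (p - x0) \<ge> 0"
proof -
  assume p: "p \<in> cellof N (smod 1) (depth N)"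
  have x0P: "x0 \<in> cellof N (smod 1) (depth N)" using sig_sub x0s by blast
  obtain \<epsilon> where e: "\<epsilon> > 0" "x0 + \<epsilon> *\<^sub>R (p - x0) \<in> cellof N (smod 1) (depth N)"
    "dist (x0 + \<epsilon> *\<^sub>R (p - x0)) x0 < r"
    using seg[OF convex_cellof x0P p] by blast
  have "sgn_ok (smod 1 l i) (g \<bullet> (x0 + \<epsilon> *\<^sub>R (p - x0) - x0))"
    using cell_ball[OF x0P e(3)] e(2) by blast
  then have "\<epsilon> * (g \<bullet> (p - x0)) \<ge> 0" by (simp add: smod_def sgn_ok_def)
  then show ?thesis using e(1) by (simp add: zero_le_mult_iff)
qed

lemma wit_exists:
  "\<exists>P Q A B e.
      P \<in> cells N \<and> Q \<in> cells N \<and> aff_dim P = int DIM('a) \<and> aff_dim Q = int DIM('a) \<and>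
      P \<noteq> Q \<and> \<sigma> = P \<inter> Q \<and> lin_part N P A \<and> lin_part N Q B \<and> unit_normal \<sigma> P e"
proof -
  define P where "P = cellof N (smod 1) (depth N)"
  define Q where "Q = cellof N (smod (-1)) (depth N)"
  have x0P: "x0 \<in> P" and x0Q: "x0 \<in> Q" using sig_sub x0s by (auto simp: P_def Q_def)
  have cP: "P \<in> cells N" using x0P sv_mod[of 1] cplx_char[of N "depth N"] by (auto simp: cells_def P_def)
  have cQ: "Q \<in> cells N" using x0Q sv_mod[of "-1"] cplx_char[of N "depth N"] by (auto simp: cells_def Q_def)
  have dP: "aff_dim P = DIM('a)" using fulldim[of 1] by (simp add: P_def)
  have dQ: "aff_dim Q = DIM('a)" using fulldim[of "-1"] by (simp add: Q_def)
  have PQ: "P \<noteq> Q"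
  proof
    assume eq: "P = Q"
    have "x0 + (of_int 1 * (r / 2)) *\<^sub>R u \<in> P"
      unfolding P_def by (rule fullball) (use r in auto)
    then have inQ: "x0 + (r / 2) *\<^sub>R u \<in> Q" using eq by simp
    have hr: "\<bar>r / 2\<bar> < r" using r by simp
    have "sgn_ok (smod (-1) l i) (g \<bullet> (x0 + (r / 2) *\<^sub>R u - x0))"
      using cell_ball[OF x0Q[unfolded Q_def] pt_props(1)[OF hr]] inQ by (simp add: Q_def)
    moreover have "r * norm g > 0" using r g_nz by simp
    ultimately show False using pt_props(2)[OF hr] u_props(2) by (simp add: smod_def sgn_ok_def)
  qed
  have sPQ: "\<sigma> = P \<inter> Q"
  proof
    show "\<sigma> \<subseteq> P \<inter> Q" using sig_sub[of "depth N"] by (auto simp: P_def Q_def)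
  next
    show "P \<inter> Q \<subseteq> \<sigma>"
    proof
      fix y assume y: "y \<in> P \<inter> Q"
      show "y \<in> \<sigma>"
        unfolding sdef cellof_def mem_Collect_eq
      proof (intro allI impI)
        fix k j assume k: "1 \<le> k" "k \<le> depth N" "j < width N k"
        show "sgn_ok (s k j) (pre N k y j)"
        proof (cases "k = l \<and> j = i")
          case True
          have "sgn_ok (smod 1 k j) (pre N k y j)" "sgn_ok (smod (-1) k j) (pre N k y j)"
            using y k by (auto simp: P_def Q_def cellof_def)
          then have "pre N k y j = 0" using True by (simp add: smod_def sgn_ok_def)
          then show ?thesis by simp
        next
          case False
          then have "smod 1 k j = s k j" by (auto simp: smod_def)
          moreover have "sgn_ok (smod 1 k j) (pre N k y j)" using y k by (auto simp: P_def cellof_def)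
          ultimately show ?thesis by simp
        qed
      qed
    qed
  qed
  have lp: "lin_part N (cellof N (smod v) (depth N)) (\<lambda>j x. lg N (Ts (smod v)) (Suc (depth N)) j \<bullet> x)" for v
    unfolding lin_part_def
  proof (intro conjI allI exI ballI impI)
    fix j show "linear (\<lambda>x. lg N (Ts (smod v)) (Suc (depth N)) j \<bullet> x)"
      by (rule bounded_linear_inner_right[THEN bounded_linear.linear])
  next
    fix x j assume "x \<in> cellof N (smod v) (depth N)" "j < width N (Suc (depth N))"
    then show "fnet N x j = lg N (Ts (smod v)) (Suc (depth N)) j \<bullet> x + lc N (Ts (smod v)) (Suc (depth N)) j"
      unfolding fnet_def by (intro cell_lin) auto
  qed
  have un: "unit_normal \<sigma> P u"
    unfolding unit_normal_def
  proof (intro conjI ballI)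
    show "norm u = 1" by (rule u_props)
  next
    fix a b assume "a \<in> \<sigma>" "b \<in> \<sigma>"
    then have "g \<bullet> (a - b) = 0" using g_perp[of a] g_perp[of b] by (simp add: inner_diff_right)
    then show "u \<bullet> (a - b) = 0" by (simp add: u_def)
  next
    fix a p assume a: "a \<in> \<sigma>" and p: "p \<in> P"
    have "g \<bullet> (p - a) \<ge> 0" using g_perp[OF a] g_pos[of p] p by (simp add: P_def inner_diff_right)
    then show "u \<bullet> (p - a) \<ge> 0" by (simp add: u_def)
  qed
  show ?thesis
    using cP cQ dP dQ PQ sPQ lp[of 1] lp[of "-1"] un unfolding P_def Q_def by blast
qed

end

lemma cells_obtain':
  assumes "P \<in> cells N"
  obtains t where "sgnv t" "P = cellof N t (depth N)"
  using assms cplx_char[of N "depth N"] unfolding cells_def by auto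

theorem mainTheorem10:
  fixes N :: "('a::euclidean_space) net" and \<sigma> :: "'a set" and l i :: nat
  assumes "supertransversal N"
    and "\<sigma> \<in> cells N" and "aff_dim \<sigma> = int DIM('a) - 1"
    and "1 \<le> l" and "l \<le> depth N" and "i < width N l" and "\<sigma> \<subseteq> bent N l i"
  shows "\<forall>j < width N (Suc (depth N)).
           trop_weight N \<sigma> j
             = norm (back_input N (Sset N \<sigma>) l i) * fwd_output N (Sset N \<sigma>) l i j"
proof -
  obtain s where s: "sgnv s" "\<sigma> = cellof N s (depth N)" using cells_obtain'[OF assms(2)] by blast
  have ne: "\<sigma> \<noteq> {}" using assms(2) by (simp add: cells_def)
  have "convex \<sigma>" using s convex_cellof by metis
  then obtain x0 where x0: "x0 \<in> rel_interior \<sigma>" using rel_interior_eq_empty ne by blast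
  interpret setting N \<sigma> l i s x0
    by unfold_locales (use assms s x0 in auto)
  obtain r where r: "r > 0" "\<And>y. dist y x0 < r \<Longrightarrow> goodupto (depth N) y"
    using ev_good[OF le_refl] unfolding eventually_nhds_metric by blast
  interpret setting2 N \<sigma> l i s x0 r
    by unfold_locales (use r in auto)
  let ?\<Phi> = "\<lambda>c. \<exists>P Q A B e.
      P \<in> cells N \<and> Q \<in> cells N \<and> aff_dim P = int DIM('a) \<and> aff_dim Q = int DIM('a) \<and>
      P \<noteq> Q \<and> \<sigma> = P \<inter> Q \<and> lin_part N P A \<and> lin_part N Q B \<and> unit_normal \<sigma> P e \<and>
      c = (\<lambda>j. if j < width N (Suc (depth N)) then A j e - B j e else 0)"
  have ex: "\<exists>c. ?\<Phi> c" using wit_exists by blast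
  have "?\<Phi> (trop_weight N \<sigma>)" unfolding trop_weight_def by (rule someI_ex[OF ex])
  then obtain P Q A B e where W: "P \<in> cells N" "Q \<in> cells N" "aff_dim P = int DIM('a)" "aff_dim Q = int DIM('a)"
      "P \<noteq> Q" "\<sigma> = P \<inter> Q" "lin_part N P A" "lin_part N Q B" "unit_normal \<sigma> P e"
      "trop_weight N \<sigma> = (\<lambda>j. if j < width N (Suc (depth N)) then A j e - B j e else 0)"
    by blast
  show ?thesis
  proof (intro allI impI)
    fix j assume j: "j < width N (Suc (depth N))"
    have "trop_weight N \<sigma> j = A j e - B j e" using W(10) j by simp
    also have "\<dots> = norm g * fwd_output N S l i j"
      by (rule wit_value[OF W(1-4,6-9) j])
    also have "g = back_input N S l i" using back_eq[OF assms(4,6)] .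
    finally show "trop_weight N \<sigma> j = norm (back_input N (Sset N \<sigma>) l i) * fwd_output N (Sset N \<sigma>) l i j" .
  qed
qed



end
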